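(* Let $\Omega\subset\mathbb{R}^3$ be a domain with boundary $\partial\Omega$ and outward unit normal $\mathbf{n}$, and consider a non-reactive fluid with density $\rho>0$ and temperature $T>0$, heat flux $\mathbf{q}=-K\nabla T$ and entropy flux by heat conduction $\mathbf{q}_s=-\frac{K}{T}\nabla T$, where $K$ is a nonnegative matrix (thermal conductivity). Let $S_T=K/T\geq 0$, let $\mathcal{G}_T e=-\nabla(e/\rho)$ on scalar fields and $\mathcal{G}_T^{*}\mathbf{w}=\frac{1}{\rho}\mathrm{div}\,\mathbf{w}$ on vector fields (the formal adjoint of $\mathcal{G}_T$), let $\mathcal{Q}_T e=\frac{1}{\rho T}\left\|\nabla\frac{e}{\rho}\right\|^2_{S_T}$ (so that $\mathcal{Q}_T e\geq 0$ for all $e$), and define $$\mathcal{J}_{\mathbf{q}}=\mathcal{Q}_T-\mathcal{G}_T^{*}S_T\mathcal{G}_T .$$ Then, with the entropy effort $e_s=\rho T$, the rate of entropy addition by heat flux satisfies $$-\frac{1}{\rho T}\,\mathrm{div}\,\mathbf{q}=\mathcal{J}_{\mathbf{q}}e_s,$$ and $$\int_\Omega e_s\,\mathcal{J}_{\mathbf{q}}e_s=-\int_{\partial\Omega}T\,(\mathbf{q}_s\cdot\mathbf{n}).$$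
   Context: For a vector $\mathbf{v}$ and matrix $X$, $\|\mathbf{v}\|^2_X=\mathbf{v}^{\mathsf T}X^{\mathsf T}\mathbf{v}$. $\mathcal{Q}_T$ is a (nonlinear) operator on scalar fields. Integrals over $\Omega$ and $\partial\Omega$ are with respect to volume and surface measure. *)

theory Defs
  imports "HOL-Analysis.Analysis"
begin

definition partial :: "(real^3 \<Rightarrow> real) \<Rightarrow> 3 \<Rightarrow> real^3 \<Rightarrow> real" where
  "partial f j x = frechet_derivative f (at x) (axis j 1)"

definition grad :: "(real^3 \<Rightarrow> real) \<Rightarrow> real^3 \<Rightarrow> real^3" where
  "grad f x = (\<chi> j. partial f j x)"

definition divg :: "(real^3 \<Rightarrow> real^3) \<Rightarrow> real^3 \<Rightarrow> real" where
  "divg w x = (\<Sum>i\<in>UNIV. partial (\<lambda>y. w y $ i) i x)"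

definition C1_on :: "(real^3) set \<Rightarrow> (real^3 \<Rightarrow> real) \<Rightarrow> bool" where
  "C1_on V f \<longleftrightarrow> (\<forall>x\<in>V. f differentiable (at x)) \<and>
                   (\<forall>j. continuous_on V (partial f j))"

definition C2_on :: "(real^3) set \<Rightarrow> (real^3 \<Rightarrow> real) \<Rightarrow> bool" where
  "C2_on V f \<longleftrightarrow> C1_on V f \<and> (\<forall>j. C1_on V (partial f j))"

definition C1_vec_on :: "(real^3) set \<Rightarrow> (real^3 \<Rightarrow> real^3) \<Rightarrow> bool" where
  "C1_vec_on V w \<longleftrightarrow> (\<forall>i. C1_on V (\<lambda>x. w x $ i))"

definition C1_mat_on :: "(real^3) set \<Rightarrow> (real^3 \<Rightarrow> real^3^3) \<Rightarrow> bool" where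
  "C1_mat_on V K \<longleftrightarrow> (\<forall>i j. C1_on V (\<lambda>x. K x $ i $ j))"

definition nonneg_matrix :: "real^3^3 \<Rightarrow> bool" where
  "nonneg_matrix A \<longleftrightarrow> (\<forall>v. v \<bullet> (A *v v) \<ge> 0)"

definition wnorm_sq :: "real^3 \<Rightarrow> real^3^3 \<Rightarrow> real" where
  "wnorm_sq v X = (v v* transpose X) \<bullet> v"

text \<open>Boundary data of a domain: surface measure sigma on the boundary and outward unit
  normal n, characterised by the Gauss divergence theorem for all vector fields that are
  C^1 on a neighbourhood of the closure (HOL-Analysis has no surface measure).\<close>
definition gauss_boundary :: "(real^3) set \<Rightarrow> (real^3) measure \<Rightarrow> (real^3 \<Rightarrow> real^3) \<Rightarrow> bool" where
  "gauss_boundary \<Omega> \<sigma> n \<longleftrightarrow>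
     space \<sigma> = frontier \<Omega> \<and> sets \<sigma> = sets (restrict_space lborel (frontier \<Omega>)) \<and>
     (\<forall>x\<in>frontier \<Omega>. norm (n x) = 1) \<and>
     (\<forall>w V. open V \<and> closure \<Omega> \<subseteq> V \<and> C1_vec_on V w \<longrightarrow>
        divg w integrable_on \<Omega> \<and> integrable \<sigma> (\<lambda>x. w x \<bullet> n x) \<and>
        integral \<Omega> (divg w) = integral\<^sup>L \<sigma> (\<lambda>x. w x \<bullet> n x))"

definition S_T :: "(real^3 \<Rightarrow> real) \<Rightarrow> (real^3 \<Rightarrow> real^3^3) \<Rightarrow> real^3 \<Rightarrow> real^3^3" where
  "S_T T K x = (1 / T x) *\<^sub>R K x"

definition G_T :: "(real^3 \<Rightarrow> real) \<Rightarrow> (real^3 \<Rightarrow> real) \<Rightarrow> real^3 \<Rightarrow> real^3" where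
  "G_T \<rho> e x = - grad (\<lambda>y. e y / \<rho> y) x"

definition G_T_adj :: "(real^3 \<Rightarrow> real) \<Rightarrow> (real^3 \<Rightarrow> real^3) \<Rightarrow> real^3 \<Rightarrow> real" where
  "G_T_adj \<rho> w x = (1 / \<rho> x) * divg w x"

definition Q_T :: "(real^3 \<Rightarrow> real) \<Rightarrow> (real^3 \<Rightarrow> real) \<Rightarrow> (real^3 \<Rightarrow> real^3^3)
                   \<Rightarrow> (real^3 \<Rightarrow> real) \<Rightarrow> real^3 \<Rightarrow> real" where
  "Q_T \<rho> T K e x = (1 / (\<rho> x * T x)) * wnorm_sq (grad (\<lambda>y. e y / \<rho> y) x) (S_T T K x)"

definition J_q :: "(real^3 \<Rightarrow> real) \<Rightarrow> (real^3 \<Rightarrow> real) \<Rightarrow> (real^3 \<Rightarrow> real^3^3)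
                   \<Rightarrow> (real^3 \<Rightarrow> real) \<Rightarrow> real^3 \<Rightarrow> real" where
  "J_q \<rho> T K e x = Q_T \<rho> T K e x - G_T_adj \<rho> (\<lambda>y. S_T T K y *v G_T \<rho> e y) x"

definition heat_flux :: "(real^3 \<Rightarrow> real) \<Rightarrow> (real^3 \<Rightarrow> real^3^3) \<Rightarrow> real^3 \<Rightarrow> real^3" where
  "heat_flux T K x = - (K x *v grad T x)"

definition entropy_flux :: "(real^3 \<Rightarrow> real) \<Rightarrow> (real^3 \<Rightarrow> real^3^3) \<Rightarrow> real^3 \<Rightarrow> real^3" where
  "entropy_flux T K x = - ((1 / T x) *\<^sub>R (K x *v grad T x))"

end

theory Submission
  imports Defs
begin


lemma partial_local:
  assumes "g differentiable at x" "open X" "x \<in> X" "\<And>y. y \<in> X \<Longrightarrow> f y = g y"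
  shows "partial f j x = partial g j x"
  unfolding partial_def
  using frechet_derivative_transform_within_open[of g x X f] assms by metis

lemma partial_mult:
  assumes f: "f differentiable at x" and g: "g differentiable at x"
  shows "partial (\<lambda>y. f y * g y) j x = f x * partial g j x + partial f j x * g x"
proof -
  have "((\<lambda>y. f y * g y) has_derivative (\<lambda>h. f x * frechet_derivative g (at x) h + frechet_derivative f (at x) h * g x)) (at x)"
    using has_derivative_mult[OF frechet_derivative_works[THEN iffD1, OF f] frechet_derivative_works[THEN iffD1, OF g]] .
  from frechet_derivative_at[OF this] show ?thesis unfolding partial_def by metis
qed

lemma partial_sum:
  assumes "finite A" "\<And>i. i \<in> A \<Longrightarrow> f i differentiable at x"
  shows "partial (\<lambda>y. \<Sum>i\<in>A. f i y) j x = (\<Sum>i\<in>A. partial (f i) j x)"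
proof -
  have "((\<lambda>y. \<Sum>i\<in>A. f i y) has_derivative (\<lambda>h. \<Sum>i\<in>A. frechet_derivative (f i) (at x) h)) (at x)"
    by (rule has_derivative_sum) (use assms frechet_derivative_works in blast)
  from frechet_derivative_at[OF this] show ?thesis unfolding partial_def by metis
qed

lemma partial_minus:
  assumes "f differentiable at x"
  shows "partial (\<lambda>y. - f y) j x = - partial f j x"
proof -
  have "((\<lambda>y. - f y) has_derivative (\<lambda>h. - frechet_derivative f (at x) h)) (at x)"
    by (rule has_derivative_minus) (use assms frechet_derivative_works in blast)
  from frechet_derivative_at[OF this] show ?thesis unfolding partial_def by metis
qed

lemma partial_inv:
  assumes "f differentiable at x" "f x \<noteq> 0"
  shows "partial (\<lambda>y. 1 / f y) j x = - partial f j x / (f x)^2"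
proof -
  have "((\<lambda>y. 1 / f y) has_derivative (\<lambda>h. - 1 * (inverse (f x) * frechet_derivative f (at x) h * inverse (f x)) + 0 / f x)) (at x)"
    by (rule has_derivative_divide) (use assms frechet_derivative_works in auto)
  from frechet_derivative_at[OF this] show ?thesis unfolding partial_def
    by (metis (no_types) assms(2) divide_inverse mult.commute mult_minus_left power2_eq_square
        inverse_mult_distrib mult.assoc mult_1 div_0 add_0_right mult_minus1)
qed


theorem lemma2:
  fixes \<Omega> U :: "(real^3) set" and \<rho> T :: "real^3 \<Rightarrow> real"
    and K :: "real^3 \<Rightarrow> real^3^3" and n :: "real^3 \<Rightarrow> real^3"
    and \<sigma> :: "(real^3) measure" and e\<^sub>s :: "real^3 \<Rightarrow> real"
  assumes dom: "open \<Omega>" "connected \<Omega>" "\<Omega> \<noteq> {}" "bounded \<Omega>"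
    and bdry: "gauss_boundary \<Omega> \<sigma> n"
    and U: "open U" "closure \<Omega> \<subseteq> U"
    and rho_pos: "\<forall>x\<in>U. \<rho> x > 0" and T_pos: "\<forall>x\<in>U. T x > 0"
    and K_nonneg: "\<forall>x\<in>U. nonneg_matrix (K x)"
    and reg: "C1_on U \<rho>" "C2_on U T" "C1_mat_on U K"
    and es: "e\<^sub>s = (\<lambda>x. \<rho> x * T x)"
  shows "(\<forall>x\<in>\<Omega>. - (1 / (\<rho> x * T x)) * divg (heat_flux T K) x = J_q \<rho> T K e\<^sub>s x)
       \<and> (\<lambda>x. e\<^sub>s x * J_q \<rho> T K e\<^sub>s x) integrable_on \<Omega>
       \<and> integral \<Omega> (\<lambda>x. e\<^sub>s x * J_q \<rho> T K e\<^sub>s x)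
           = - integral\<^sup>L \<sigma> (\<lambda>x. T x * (entropy_flux T K x \<bullet> n x))"
proof -
  define w where "w = (\<lambda>x. K x *v grad T x)"
  have Tdiff: "\<And>x. x \<in> U \<Longrightarrow> T differentiable at x"
    using reg(2) unfolding C2_on_def C1_on_def by blast
  have pTdiff: "\<And>x j. x \<in> U \<Longrightarrow> partial T j differentiable at x"
    using reg(2) unfolding C2_on_def C1_on_def by blast
  have Kdiff: "\<And>x i j. x \<in> U \<Longrightarrow> (\<lambda>y. K y $ i $ j) differentiable at x"
    using reg(3) unfolding C1_mat_on_def C1_on_def by blast
  have wcomp: "\<And>i. (\<lambda>y. w y $ i) = (\<lambda>y. \<Sum>k\<in>UNIV. K y $ i $ k * partial T k y)"
    by (simp add: w_def matrix_vector_mult_def grad_def)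
  have wdiff: "\<And>x i. x \<in> U \<Longrightarrow> (\<lambda>y. w y $ i) differentiable at x"
  proof -
    fix x i assume x: "x \<in> U"
    have "\<And>k. (\<lambda>y. K y $ i $ k * partial T k y) differentiable at x"
      by (rule differentiable_mult[OF Kdiff[OF x] pTdiff[OF x]])
    then show "(\<lambda>y. w y $ i) differentiable at x"
      unfolding wcomp by (intro differentiable_sum) auto
  qed
  have grad_es: "\<And>x. x \<in> U \<Longrightarrow> grad (\<lambda>y. e\<^sub>s y / \<rho> y) x = grad T x"
  proof -
    fix x assume x: "x \<in> U"
    have "\<And>j. partial (\<lambda>y. e\<^sub>s y / \<rho> y) j x = partial T j x"
      by (rule partial_local[OF Tdiff[OF x] U(1) x]) (use rho_pos es in force)
    then show "grad (\<lambda>y. e\<^sub>s y / \<rho> y) x = grad T x" by (simp add: grad_def)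
  qed
  have key: "J_q \<rho> T K e\<^sub>s x = divg w x / (\<rho> x * T x)"
    and hf: "divg (heat_flux T K) x = - divg w x" if x: "x \<in> U" for x
  proof -
    have Tx: "T x > 0" and rx: "\<rho> x > 0" using x T_pos rho_pos by auto
    define a where "a = w x \<bullet> grad T x"
    define D where "D = divg w x"
    have "divg (heat_flux T K) x = (\<Sum>i\<in>UNIV. partial (\<lambda>y. - (w y $ i)) i x)"
      by (simp add: divg_def heat_flux_def w_def)
    also have "\<dots> = - D"
      by (simp add: D_def divg_def partial_minus[OF wdiff[OF x]] sum_negf)
    finally show "divg (heat_flux T K) x = - divg w x" by (simp add: D_def)
    have vt: "grad T x v* transpose ((1 / T x) *\<^sub>R K x) = (1 / T x) *\<^sub>R (K x *v grad T x)"
      by (simp add: scaleR_matrix_vector_assoc[symmetric])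
    have Q0: "Q_T \<rho> T K e\<^sub>s x = (1 / (\<rho> x * T x)) * ((1 / T x) * a)"
      unfolding Q_T_def grad_es[OF x] wnorm_sq_def S_T_def vt a_def w_def
      by (simp add: inner_commute)
    have Q: "Q_T \<rho> T K e\<^sub>s x = a / (\<rho> x * (T x)^2)"
      unfolding Q0 by (simp add: power2_eq_square)
    have Wloc: "\<And>y i. y \<in> U \<Longrightarrow> (S_T T K y *v G_T \<rho> e\<^sub>s y) $ i = - (1 / T y * w y $ i)"
      by (simp add: S_T_def G_T_def grad_es w_def matrix_vector_mult_def sum_distrib_left
          sum_negf[symmetric] algebra_simps)
    have Tinvdiff: "(\<lambda>y. 1 / T y) differentiable at x"
      using Tdiff[OF x] Tx by (auto intro!: derivative_intros)
    have pW: "partial (\<lambda>y. (S_T T K y *v G_T \<rho> e\<^sub>s y) $ i) i x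
        = - (partial (\<lambda>y. w y $ i) i x / T x) + partial T i x * w x $ i / (T x)^2" for i
    proof -
      have "partial (\<lambda>y. (S_T T K y *v G_T \<rho> e\<^sub>s y) $ i) i x = partial (\<lambda>y. - (1 / T y * w y $ i)) i x"
      proof (rule partial_local[OF _ U(1) x])
        show "(\<lambda>y. - (1 / T y * w y $ i)) differentiable at x"
          by (rule differentiable_minus, rule differentiable_mult[OF Tinvdiff wdiff[OF x]])
      qed (use Wloc in auto)
      also have "\<dots> = - partial (\<lambda>y. 1 / T y * w y $ i) i x"
        by (rule partial_minus, rule differentiable_mult[OF Tinvdiff wdiff[OF x]])
      also have "\<dots> = - (1 / T x * partial (\<lambda>y. w y $ i) i x + partial (\<lambda>y. 1 / T y) i x * w x $ i)"
        by (simp only: partial_mult[OF Tinvdiff wdiff[OF x]])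
      also have "\<dots> = - (partial (\<lambda>y. w y $ i) i x / T x) + partial T i x * w x $ i / (T x)^2"
        using partial_inv[OF Tdiff[OF x]] Tx by simp
      finally show ?thesis .
    qed
    have aeq: "a = (\<Sum>i\<in>UNIV. partial T i x * w x $ i)"
      by (simp add: a_def inner_vec_def grad_def mult.commute)
    have "divg (\<lambda>y. S_T T K y *v G_T \<rho> e\<^sub>s y) x = - D / T x + a / (T x)^2"
      by (simp add: divg_def pW D_def aeq sum_subtractf sum_divide_distrib)
    then have "J_q \<rho> T K e\<^sub>s x = a / (\<rho> x * (T x)^2) - (1 / \<rho> x) * (- D / T x + a / (T x)^2)"
      by (simp add: J_q_def Q G_T_adj_def)
    also have "\<dots> = D / (\<rho> x * T x)"
      using Tx rx by (simp add: field_simps power2_eq_square)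
    finally show "J_q \<rho> T K e\<^sub>s x = divg w x / (\<rho> x * T x)" by (simp add: D_def)
  qed
  have OU: "\<Omega> \<subseteq> U" using U(2) closure_subset by blast
  have part1: "\<forall>x\<in>\<Omega>. - (1 / (\<rho> x * T x)) * divg (heat_flux T K) x = J_q \<rho> T K e\<^sub>s x"
    using key hf OU by auto
  have eq2: "\<And>x. x \<in> \<Omega> \<Longrightarrow> divg w x = e\<^sub>s x * J_q \<rho> T K e\<^sub>s x"
    using key OU T_pos rho_pos es by force
  have C1w: "C1_vec_on U w"
    unfolding C1_vec_on_def C1_on_def
  proof (intro allI conjI ballI)
    fix i x assume "x \<in> U" then show "(\<lambda>y. w y $ i) differentiable at x" by (rule wdiff)
  next
    fix i j
    let ?E = "\<lambda>x. \<Sum>k\<in>UNIV. K x $ i $ k * partial (partial T k) j x + partial (\<lambda>y. K y $ i $ k) j x * partial T k x"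
    have "continuous_on U ?E"
    proof (intro continuous_on_sum continuous_on_add continuous_on_mult)
      fix k
      show "continuous_on U (\<lambda>x. K x $ i $ k)"
        by (rule continuous_at_imp_continuous_on)
           (use Kdiff differentiable_imp_continuous_within in blast)
      show "continuous_on U (partial (partial T k) j)"
        using reg(2) unfolding C2_on_def C1_on_def by blast
      show "continuous_on U (partial (\<lambda>y. K y $ i $ k) j)"
        using reg(3) unfolding C1_mat_on_def C1_on_def by blast
      show "continuous_on U (partial T k)"
        using reg(2) unfolding C2_on_def C1_on_def by blast
    qed
    moreover have "\<And>x. x \<in> U \<Longrightarrow> ?E x = partial (\<lambda>y. w y $ i) j x"
    proof -
      fix x assume x: "x \<in> U"
      have "partial (\<lambda>y. w y $ i) j x = (\<Sum>k\<in>UNIV. partial (\<lambda>y. K y $ i $ k * partial T k y) j x)"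
        unfolding wcomp
        by (rule partial_sum) (auto intro!: differentiable_mult Kdiff[OF x] pTdiff[OF x])
      also have "\<dots> = ?E x"
        by (rule sum.cong[OF refl], rule partial_mult[OF Kdiff[OF x] pTdiff[OF x]])
      finally show "?E x = partial (\<lambda>y. w y $ i) j x" by simp
    qed
    ultimately show "continuous_on U (partial (\<lambda>y. w y $ i) j)"
      by (rule continuous_on_eq) blast
  qed
  have G: "divg w integrable_on \<Omega> \<and> integrable \<sigma> (\<lambda>x. w x \<bullet> n x) \<and>
        integral \<Omega> (divg w) = integral\<^sup>L \<sigma> (\<lambda>x. w x \<bullet> n x)"
    using bdry[unfolded gauss_boundary_def, THEN conjunct2, THEN conjunct2, THEN conjunct2,
        rule_format, of U w] U C1w by blast
  have sp: "space \<sigma> = frontier \<Omega>" by (rule bdry[unfolded gauss_boundary_def, THEN conjunct1])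
  have FU: "frontier \<Omega> \<subseteq> U" using U(2) by (auto simp: frontier_def)
  have R: "integral\<^sup>L \<sigma> (\<lambda>x. T x * (entropy_flux T K x \<bullet> n x)) = integral\<^sup>L \<sigma> (\<lambda>x. - (w x \<bullet> n x))"
  proof (rule Bochner_Integration.integral_cong[OF refl])
    fix x assume "x \<in> space \<sigma>"
    then have "T x > 0" using sp FU T_pos by auto
    then show "T x * (entropy_flux T K x \<bullet> n x) = - (w x \<bullet> n x)"
      by (simp add: entropy_flux_def w_def)
  qed
  show ?thesis
  proof (intro conjI part1)
    show "(\<lambda>x. e\<^sub>s x * J_q \<rho> T K e\<^sub>s x) integrable_on \<Omega>"
      by (rule integrable_eq[OF G[THEN conjunct1]]) (rule eq2)
    have "integral \<Omega> (\<lambda>x. e\<^sub>s x * J_q \<rho> T K e\<^sub>s x) = integral \<Omega> (divg w)"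
      by (rule Henstock_Kurzweil_Integration.integral_cong) (rule eq2[symmetric])
    then show "integral \<Omega> (\<lambda>x. e\<^sub>s x * J_q \<rho> T K e\<^sub>s x)
           = - integral\<^sup>L \<sigma> (\<lambda>x. T x * (entropy_flux T K x \<bullet> n x))"
      using G R by simp
  qed
qed

end
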